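(* Let $p>3$ be a prime. Then $$\left(\tfrac{p-1}{2}\right)!!\prod_{\substack{i,j=1\\ p\nmid 2i+j}}^{(p-1)/2}(2i+j)\ \equiv\ \left(\frac{-2}{p}\right)\left(\tfrac{p-3}{2}\right)!!\prod_{\substack{i,j=1\\ p\nmid 2i-j}}^{(p-1)/2}(2i-j)\ \equiv\ \pm1\pmod p.$$
   Context: For a positive integer $n$, $n!!=\prod_{k=0}^{\lfloor(n-1)/2\rfloor}(n-2k)$, and $0!!=1$. $\left(\frac{\cdot}{p}\right)$ denotes the Legendre symbol. *)

theory Defs
  imports "HOL-Number_Theory.Number_Theory"
begin

definition dfact :: "nat \<Rightarrow> nat" where
  "dfact n = (if n = 0 then 1 else (\<Prod>k\<in>{0..(n - 1) div 2}. n - 2 * k))"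

end

theory Submission
  imports Defs
begin

definition pr :: "int \<Rightarrow> int set \<Rightarrow> int" where
  "pr P S = (\<Prod>t\<in>{t\<in>S. \<not> P dvd t}. t)"

lemma prod_int_fact: "(\<Prod>t\<in>{1..int k}. t) = fact k"
proof (induction k)
  case 0 then show ?case by simp
next
  case (Suc k)
  have "{1..int (Suc k)} = insert (int k + 1) {1..int k}" by auto
  then show ?case using Suc by (simp add: algebra_simps)
qed

lemma window:
  fixes p :: nat and a :: int
  assumes "prime p"
  shows "[pr (int p) {a..a + int p - 1} = -1] (mod int p)"
proof -
  define P where "P = int p"
  have P1: "P > 1" using assms prime_gt_1_nat P_def by auto
  define T where "T = {t\<in>{a..a + P - 1}. \<not> P dvd t}"
  have "[pr P {a..a + P - 1} = (\<Prod>t\<in>T. t mod P)] (mod P)"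
    unfolding pr_def T_def by (rule cong_prod) (simp add: cong_def)
  also have "(\<Prod>t\<in>T. t mod P) = (\<Prod>r\<in>{1..P-1}. r)"
  proof (rule prod.reindex_bij_witness[where j = "\<lambda>t. t mod P" and i = "\<lambda>r. a + (r - a) mod P"])
    fix t assume t: "t \<in> T"
    then have t1: "a \<le> t" "t \<le> a + P - 1" unfolding T_def by auto
    have "(t - a) mod P = t - a" using t1 by (simp add: mod_pos_pos_trivial)
    then show "a + (t mod P - a) mod P = t"
      by (metis add.commute diff_add_cancel mod_diff_left_eq)
    show "t mod P \<in> {1..P-1}" using t P1 unfolding T_def
      by (auto simp: dvd_eq_mod_eq_0 order_le_less) (smt (verit) pos_mod_sign pos_mod_bound)+
    show "t mod P = t mod P" ..
  next
    fix r assume r: "r \<in> {1..P-1}"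
    show "(a + (r - a) mod P) mod P = r" using r
      by (simp add: mod_add_right_eq mod_pos_pos_trivial)
    have "(a + (r - a) mod P) mod P \<noteq> 0" using r
      by (simp add: mod_add_right_eq mod_pos_pos_trivial)
    then show "a + (r - a) mod P \<in> T" unfolding T_def using P1
      by (auto simp: dvd_eq_mod_eq_0)
  qed
  also have "(\<Prod>r\<in>{1..P-1}. r) = fact (p - 1)"
    using prod_int_fact[of "p - 1"] P1 P_def by (simp add: of_nat_diff)
  finally show ?thesis using wilson_theorem[OF assms] P_def
    using cong_trans by blast
qed

lemma pr_split:
  assumes "a \<le> b + 1" "b \<le> c"
  shows "pr P {a..c} = pr P {a..b} * pr P {b+1..c}"
proof -
  have "{t\<in>{a..c}. \<not> P dvd t} = {t\<in>{a..b}. \<not> P dvd t} \<union> {t\<in>{b+1..c}. \<not> P dvd t}"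
    using assms by auto
  note eq = this
  show ?thesis unfolding pr_def eq by (rule prod.union_disjoint) (auto intro: rev_finite_subset[OF finite_atLeastAtMost_int])
qed

lemma pr_single: "pr P {e..e} = (if P dvd e then 1 else e)"
proof -
  have "{t\<in>{e..e}. \<not> P dvd t} = (if P dvd e then {} else {e})" by auto
  then show ?thesis unfolding pr_def by simp
qed

lemma pr_single': "pr P {e} = (if P dvd e then 1 else e)"
  using pr_single[of P e] by simp

lemma pr_nodvd: "(\<And>t. t \<in> S \<Longrightarrow> \<not> P dvd t) \<Longrightarrow> pr P S = (\<Prod>t\<in>S. t)"
  unfolding pr_def by (rule prod.cong) auto

lemma row_plus: "(\<Prod>j\<in>{j\<in>{1..N}. \<not> P dvd c + j}. c + j) = pr P {c+1..c+N}"
  unfolding pr_def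
  by (rule prod.reindex_bij_witness[where i = "\<lambda>t. t - c" and j = "\<lambda>j. c + j"]) auto

lemma row_minus: "(\<Prod>j\<in>{j\<in>{1..N}. \<not> P dvd c - j}. c - j) = pr P {c-N..c-1}"
  unfolding pr_def
  by (rule prod.reindex_bij_witness[where i = "\<lambda>t. c - t" and j = "\<lambda>j. c - j"]) auto

lemma prod_2i: "(\<Prod>i\<in>{1..int k}. 2 * i) = 2 ^ k * fact k"
proof (induction k)
  case 0 then show ?case by simp
next
  case (Suc k)
  have "{1..int (Suc k)} = insert (int k + 1) {1..int k}" by auto
  then show ?case using Suc by (simp add: algebra_simps)
qed

lemma dfact0: "dfact 0 = 1" by (simp add: dfact_def)
lemma dfact1: "dfact (Suc 0) = 1" by (simp add: dfact_def)
lemma dfact_rec: "dfact (Suc (Suc n)) = (n + 2) * dfact n"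
proof (cases n)
  case 0 then show ?thesis by (simp add: dfact_def)
next
  case (Suc k)
  have e: "(Suc (Suc n) - 1) div 2 = Suc ((n - 1) div 2)" using Suc by simp
  have "dfact (Suc (Suc n)) = (\<Prod>k=0..Suc ((n - 1) div 2). Suc (Suc n) - 2 * k)"
    unfolding dfact_def e by simp
  also have "\<dots> = (n + 2) * (\<Prod>k=0..(n - 1) div 2. Suc (Suc n) - 2 * Suc k)"
    by (subst prod.atLeast0_atMost_Suc_shift) simp
  also have "(\<Prod>k=0..(n - 1) div 2. Suc (Suc n) - 2 * Suc k) = dfact n"
    unfolding dfact_def using Suc by simp
  finally show ?thesis .
qed

lemma dfact_fact: "dfact (Suc n) * dfact n = fact (Suc n)"
proof (induction n)
  case 0 then show ?case by (simp add: dfact0 dfact1)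
next
  case (Suc n)
  then show ?case by (simp add: dfact_rec algebra_simps)
qed

lemma dfact_even: "dfact (2 * m) = 2 ^ m * fact m"
proof (induction m)
  case 0 then show ?case by (simp add: dfact0)
next
  case (Suc m)
  have "2 * Suc m = Suc (Suc (2 * m))" by simp
  then show ?case using Suc by (simp add: dfact_rec algebra_simps)
qed

lemma dfact_step: "int (dfact (a + 2 * i)) = int (dfact a) * (\<Prod>k\<in>{1..int i}. int a + 2 * k)"
proof (induction i)
  case 0 then show ?case by simp
next
  case (Suc i)
  have e: "a + 2 * Suc i = Suc (Suc (a + 2 * i))" by simp
  have "{1..int (Suc i)} = insert (int i + 1) {1..int i}" by auto
  then show ?case using Suc unfolding e by (simp add: dfact_rec algebra_simps)
qed

lemma dfact_odd: "int (dfact (2 * K + 1)) = (\<Prod>k\<in>{0..int K}. 2 * k + 1)"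
proof (induction K)
  case 0 then show ?case by (simp add: dfact1)
next
  case (Suc K)
  have e: "2 * Suc K + 1 = Suc (Suc (2 * K + 1))" by simp
  have "{0..int (Suc K)} = insert (int K + 1) {0..int K}" by auto
  then show ?case using Suc unfolding e by (simp add: dfact_rec algebra_simps)
qed

lemma prod_pairs: "(\<Prod>t\<in>{c+1..c+2*int m}. t) = (\<Prod>i\<in>{1..int m}. (c + 2*i - 1) * (c + 2*i))"
proof (induction m)
  case 0 then show ?case by simp
next
  case (Suc m)
  have s1: "{c+1..c+2*int (Suc m)} = insert (c + 2*int m + 2) (insert (c + 2*int m + 1) {c+1..c+2*int m})" by auto
  have "{1..int (Suc m)} = insert (int m + 1) {1..int m}" by auto
  then show ?case using Suc unfolding s1 by (simp add: algebra_simps)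
qed

theorem lemma6p1:
  fixes p :: nat
  assumes "prime p" and "p > 3"
  defines "A \<equiv> int (dfact ((p - 1) div 2)) *
      (\<Prod>(i, j) \<in> {(i, j). i \<in> {1..int ((p - 1) div 2)} \<and> j \<in> {1..int ((p - 1) div 2)}
                        \<and> \<not> int p dvd 2 * i + j}. 2 * i + j)"
    and "B \<equiv> Legendre (-2) (int p) * int (dfact ((p - 3) div 2)) *
      (\<Prod>(i, j) \<in> {(i, j). i \<in> {1..int ((p - 1) div 2)} \<and> j \<in> {1..int ((p - 1) div 2)}
                        \<and> \<not> int p dvd 2 * i - j}. 2 * i - j)"
  shows "[A = B] (mod int p) \<and> ([B = 1] (mod int p) \<or> [B = -1] (mod int p))"
proof -
  define n where "n = (p - 1) div 2"
  define N where "N = int n"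
  define P where "P = int p"
  have podd: "odd p" using assms prime_odd_nat by auto
  have pn: "p = 2 * n + 1" using podd n_def by presburger
  have PN: "P = 2 * N + 1" using pn P_def N_def by simp
  have n2: "n \<ge> 2" using assms(2) pn by simp
  have Pprime: "prime P" using assms(1) P_def by simp
  have nodvd: "\<not> P dvd t" if "1 \<le> t" "t \<le> P - 1" for t
    using that zdvd_imp_le[of P t] by linarith
  define Q where "Q i = pr P {2*i+1..2*i+N}" for i
  define R where "R i = pr P {2*i-N..2*i-1}" for i
  define X where "X = (\<Prod>i\<in>{1..N}. Q i)"
  define Y where "Y = (\<Prod>i\<in>{1..N}. R i)"
  have setA: "{(i, j). i \<in> {1..N} \<and> j \<in> {1..N} \<and> \<not> P dvd 2*i+j}
      = Sigma {1..N} (\<lambda>i. {j\<in>{1..N}. \<not> P dvd 2*i+j})" by auto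
  have XA: "(\<Prod>(i,j)\<in>{(i, j). i \<in> {1..N} \<and> j \<in> {1..N} \<and> \<not> P dvd 2*i+j}. 2*i+j) = X"
    unfolding setA
  proof -
    have "(\<Prod>(i,j)\<in>Sigma {1..N} (\<lambda>i. {j\<in>{1..N}. \<not> P dvd 2*i+j}). 2*i+j)
        = (\<Prod>i\<in>{1..N}. \<Prod>j\<in>{j\<in>{1..N}. \<not> P dvd 2*i+j}. 2*i+j)"
      by (rule prod.Sigma[symmetric]) (auto intro: rev_finite_subset[OF finite_atLeastAtMost_int])
    also have "\<dots> = X" unfolding X_def Q_def by (rule prod.cong[OF refl]) (rule row_plus)
    finally show "(\<Prod>(i,j)\<in>Sigma {1..N} (\<lambda>i. {j\<in>{1..N}. \<not> P dvd 2*i+j}). 2*i+j) = X" .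
  qed
  have setB: "{(i, j). i \<in> {1..N} \<and> j \<in> {1..N} \<and> \<not> P dvd 2*i-j}
      = Sigma {1..N} (\<lambda>i. {j\<in>{1..N}. \<not> P dvd 2*i-j})" by auto
  have YB: "(\<Prod>(i,j)\<in>{(i, j). i \<in> {1..N} \<and> j \<in> {1..N} \<and> \<not> P dvd 2*i-j}. 2*i-j) = Y"
    unfolding setB
  proof -
    have "(\<Prod>(i,j)\<in>Sigma {1..N} (\<lambda>i. {j\<in>{1..N}. \<not> P dvd 2*i-j}). 2*i-j)
        = (\<Prod>i\<in>{1..N}. \<Prod>j\<in>{j\<in>{1..N}. \<not> P dvd 2*i-j}. 2*i-j)"
      by (rule prod.Sigma[symmetric]) (auto intro: rev_finite_subset[OF finite_atLeastAtMost_int])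
    also have "\<dots> = Y" unfolding Y_def R_def by (rule prod.cong[OF refl]) (rule row_minus)
    finally show "(\<Prod>(i,j)\<in>Sigma {1..N} (\<lambda>i. {j\<in>{1..N}. \<not> P dvd 2*i-j}). 2*i-j) = Y" .
  qed
  have Aeq: "A = int (dfact n) * X" using A_def XA N_def n_def P_def by simp
  have n3: "(p - 3) div 2 = n - 1" using pn by simp
  have Beq: "B = Legendre (-2) P * int (dfact (n - 1)) * Y"
    using B_def YB N_def n_def P_def n3 by simp
  have win: "[pr P {a..a + P - 1} = -1] (mod P)" for a
    using window[OF assms(1)] P_def by simp
  have QR: "[Q i * R i * (2*i) = -1] (mod P)" if i: "i \<in> {1..N}" for i
  proof -
    have "pr P {2*i-N..2*i+N} = R i * pr P {2*i..2*i+N}"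
      unfolding R_def using i N_def by (subst pr_split[where b="2*i-1"]) auto
    also have "pr P {2*i..2*i+N} = pr P {2*i..2*i} * Q i"
      unfolding Q_def using i N_def by (subst pr_split[where b="2*i"]) auto
    also have "pr P {2*i..2*i} = 2*i" using nodvd[of "2*i"] i PN by (simp add: pr_single')
    finally have "pr P {2*i-N..2*i+N} = Q i * R i * (2*i)" by simp
    moreover have "2*i+N = (2*i-N) + P - 1" using PN by simp
    ultimately show ?thesis using win[of "2*i-N"] by simp
  qed
  have cardN: "card {1..N} = n" using N_def by simp
  have XY: "[X * Y * (2^n * fact n) = (-1)^n] (mod P)"
  proof -
    have "X * Y * (2^n * fact n) = X * Y * (\<Prod>i\<in>{1..N}. 2*i)"
      using prod_2i[of n] N_def by simp
    also have "\<dots> = (\<Prod>i\<in>{1..N}. Q i * R i * (2*i))"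
      unfolding X_def Y_def by (simp only: prod.distrib)
    also have "[\<dots> = (\<Prod>i\<in>{1..N}. -1)] (mod P)" by (rule cong_prod) (rule QR)
    also have "(\<Prod>i\<in>{1..N}. (-1::int)) = (-1)^n" using cardN by simp
    finally show ?thesis .
  qed
  have cop2: "coprime (2^n) P"
  proof -
    have "\<not> P dvd 2" using nodvd[of 2] PN n2 N_def by simp
    then have "coprime P 2" using Pprime prime_imp_coprime by blast
    then show ?thesis by (simp add: coprime_commute)
  qed
  have AB: "[A * B = 1] (mod P)"
  proof -
    have df: "int (dfact n) * int (dfact (n - 1)) = fact n"
      using dfact_fact[of "n - 1"] n2 by (metis Suc_diff_1 less_le_trans of_nat_fact of_nat_mult pos2)
    have "2^n * (A * B) = Legendre (-2) P * (X * Y * (2^n * fact n))"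
      unfolding Aeq Beq using df by (simp add: algebra_simps)
    also have "[\<dots> = Legendre (-2) P * (-1)^n] (mod P)" using XY by (simp add: cong_mult)
    also have "[Legendre (-2) P * (-1)^n = (-2)^n * (-1)^n] (mod P)"
      using euler_criterion[OF assms(1)] assms(2) P_def n_def by (simp add: cong_mult)
    also have "(-2::int)^n * (-1)^n = 2^n * 1" by (simp add: power_mult_distrib[symmetric])
    finally show ?thesis using cop2 cong_mult_lcancel by blast
  qed
  have A2: "[A * A = 1] (mod P)"
  proof (cases "even n")
    case True
    then obtain m where nm: "n = 2*m" by blast
    define M where "M = int m"
    have NM: "N = 2*M" using N_def M_def nm by simp
    have m1: "M \<ge> 1" using n2 nm M_def by simp
    have Xs: "X = (\<Prod>i\<in>{1..M}. Q i * Q (i+M))"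
    proof -
      have un: "{1..N} = {1..M} \<union> {M+1..2*M}" using NM m1 by auto
      have "X = (\<Prod>i\<in>{1..M}. Q i) * (\<Prod>i\<in>{M+1..2*M}. Q i)"
        unfolding X_def un by (rule prod.union_disjoint) auto
      also have "(\<Prod>i\<in>{M+1..2*M}. Q i) = (\<Prod>i\<in>{1..M}. Q (i+M))"
        by (rule prod.reindex_bij_witness[where j="\<lambda>k. k-M" and i="\<lambda>k. k+M"]) auto
      finally show ?thesis by (simp add: prod.distrib)
    qed
    have pair: "[Q i * Q (i+M) * (2*i) = -1] (mod P)" if i: "i \<in> {1..M}" for i
    proof -
      have "pr P {2*i+1..2*i+P} = Q i * pr P {2*i+N+1..2*i+P}"
        unfolding Q_def using i NM PN by (subst pr_split[where b="2*i+N"]) auto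
      also have "pr P {2*i+N+1..2*i+P} = pr P {2*i+N+1..2*i+2*N} * pr P {2*i+P..2*i+P}"
        using i NM PN by (subst pr_split[where b="2*i+2*N"]) (auto simp: algebra_simps)
      also have "pr P {2*i+N+1..2*i+2*N} = Q (i+M)"
        unfolding Q_def using NM by (simp add: algebra_simps)
      also have "pr P {2*i+P..2*i+P} = 2*i+P"
      proof -
        have "\<not> P dvd 2*i" using nodvd[of "2*i"] i NM PN by simp
        then have "\<not> P dvd 2*i+P" by (simp add: dvd_add_left_iff)
        then show ?thesis by (simp add: pr_single')
      qed
      finally have e: "pr P {2*i+1..2*i+P} = Q i * Q (i+M) * (2*i+P)" by (simp add: mult.assoc)
      have "[Q i * Q (i+M) * (2*i+P) = -1] (mod P)" using win[of "2*i+1"] e by simp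
      moreover have "[Q i * Q (i+M) * (2*i+P) = Q i * Q (i+M) * (2*i)] (mod P)"
        by (rule cong_mult) (auto simp: cong_def)
      ultimately show ?thesis using cong_sym cong_trans by blast
    qed
    have cardM: "card {1..M} = m" using M_def by simp
    have "A = X * (\<Prod>i\<in>{1..M}. 2*i)"
      using Aeq nm dfact_even[of m] prod_2i[of m] M_def by simp
    also have "\<dots> = (\<Prod>i\<in>{1..M}. Q i * Q (i+M) * (2*i))"
      unfolding Xs by (simp only: prod.distrib)
    also have "[\<dots> = (\<Prod>i\<in>{1..M}. -1)] (mod P)" by (rule cong_prod) (rule pair)
    also have "(\<Prod>i\<in>{1..M}. (-1::int)) = (-1)^m" using cardM by simp
    finally have Am: "[A = (-1)^m] (mod P)" .
    have "[A * A = (-1)^m * (-1)^m] (mod P)" using cong_mult[OF Am Am] .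
    then show ?thesis by (simp add: power_mult_distrib[symmetric])
  next
    case False
    then obtain m where nm: "n = 2*m+1" using oddE by blast
    define M where "M = int m"
    have NM: "N = 2*M+1" using N_def M_def nm by simp
    have m1: "M \<ge> 1" using n2 nm M_def by simp
    define E where "E = (\<Prod>i\<in>{1..M}. 2*i+N+1)"
    define Od where "Od = (\<Prod>i\<in>{1..M}. N+2*i)"
    have Xs: "X = (\<Prod>i\<in>{1..M}. Q i * Q (i+M+1)) * Q (M+1)"
    proof -
      have un: "{1..N} = {1..M} \<union> ({M+1..M+1} \<union> {M+2..2*M+1})" using NM m1 by auto
      have "X = (\<Prod>i\<in>{1..M}. Q i) * ((\<Prod>i\<in>{M+1..M+1}. Q i) * (\<Prod>i\<in>{M+2..2*M+1}. Q i))"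
      proof -
        have "prod Q ({M+1..M+1} \<union> {M+2..2*M+1}) = prod Q {M+1..M+1} * prod Q {M+2..2*M+1}"
          by (rule prod.union_disjoint) auto
        moreover have "prod Q ({1..M} \<union> ({M+1..M+1} \<union> {M+2..2*M+1})) = prod Q {1..M} * prod Q ({M+1..M+1} \<union> {M+2..2*M+1})"
          by (rule prod.union_disjoint) auto
        ultimately show ?thesis unfolding X_def un by simp
      qed
      also have "(\<Prod>i\<in>{M+2..2*M+1}. Q i) = (\<Prod>i\<in>{1..M}. Q (i+M+1))"
        by (rule prod.reindex_bij_witness[where j="\<lambda>k. k-M-1" and i="\<lambda>k. k+M+1"]) auto
      finally show ?thesis by (simp add: prod.distrib algebra_simps)
    qed
    have pair: "[Q i * Q (i+M+1) * (2*i+N+1) = -1] (mod P)" if i: "i \<in> {1..M}" for i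
    proof -
      have "pr P {2*i+1..2*i+P} = Q i * pr P {2*i+N+1..2*i+P}"
        unfolding Q_def using i NM PN by (subst pr_split[where b="2*i+N"]) auto
      also have "pr P {2*i+N+1..2*i+P} = pr P {2*i+N+1..2*i+N+1} * pr P {2*i+N+2..2*i+P}"
        using i NM PN by (subst pr_split[where b="2*i+N+1"]) (auto simp: algebra_simps)
      also have "pr P {2*i+N+2..2*i+P} = Q (i+M+1)"
        unfolding Q_def using NM PN by (simp add: algebra_simps)
      also have "pr P {2*i+N+1..2*i+N+1} = 2*i+N+1"
        using nodvd[of "2*i+N+1"] i NM PN by (simp add: pr_single')
      finally have e: "pr P {2*i+1..2*i+P} = Q i * Q (i+M+1) * (2*i+N+1)" by (simp add: algebra_simps)
      show ?thesis using win[of "2*i+1"] e by simp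
    qed
    have cardM: "card {1..M} = m" using M_def by simp
    have XE: "[X * E = (-1)^m * Q (M+1)] (mod P)"
    proof -
      have "X * E = (\<Prod>i\<in>{1..M}. Q i * Q (i+M+1) * (2*i+N+1)) * Q (M+1)"
        unfolding Xs E_def by (simp only: prod.distrib mult_ac)
      also have "[\<dots> = (\<Prod>i\<in>{1..M}. -1) * Q (M+1)] (mod P)"
        by (rule cong_mult, rule cong_prod, rule pair, simp_all)
      also have "(\<Prod>i\<in>{1..M}. (-1::int)) = (-1)^m" using cardM by simp
      finally show ?thesis .
    qed
    have QM: "Q (M+1) = Od * E"
    proof -
      have "Q (M+1) = pr P {N+2..2*N+1}" unfolding Q_def using NM by (simp add: algebra_simps)
      also have "\<dots> = pr P {N+2..2*N} * pr P {2*N+1..2*N+1}"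
        using NM m1 by (subst pr_split[where b="2*N"]) auto
      also have "pr P {2*N+1..2*N+1} = 1" using PN by (simp add: pr_single')
      also have "pr P {N+2..2*N} = (\<Prod>t\<in>{N+2..2*N}. t)"
        by (rule pr_nodvd) (use nodvd PN NM in auto)
      also have "{N+2..2*N} = {(N+1)+1..(N+1)+2*int m}" using NM M_def by (simp add: algebra_simps)
      also have "(\<Prod>t\<in>{(N+1)+1..(N+1)+2*int m}. t) = (\<Prod>i\<in>{1..M}. (N+2*i) * (2*i+N+1))"
        unfolding prod_pairs M_def by (simp add: algebra_simps)
      finally show ?thesis unfolding Od_def E_def by (simp add: prod.distrib)
    qed
    have copE: "coprime E P"
    proof -
      have "\<not> P dvd E" unfolding E_def
        using nodvd NM PN Pprime by (subst prime_dvd_prod_iff) auto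
      then show ?thesis using Pprime prime_imp_coprime coprime_commute by blast
    qed
    have XO: "[X = (-1)^m * Od] (mod P)"
    proof -
      have "[X * E = ((-1)^m * Od) * E] (mod P)" using XE QM by (simp add: mult.assoc)
      then show ?thesis using copE cong_mult_rcancel by blast
    qed
    define D where "D = int (dfact (n + 2*m))"
    have AD: "[A = (-1)^m * D] (mod P)"
    proof -
      have "D = int (dfact n) * Od" unfolding D_def Od_def using dfact_step[of n m] N_def M_def by simp
      moreover have "[A = int (dfact n) * ((-1)^m * Od)] (mod P)" using Aeq XO by (simp add: cong_mult)
      ultimately show ?thesis by (simp add: algebra_simps)
    qed
    have Dprod: "D = (\<Prod>k\<in>{0..N-1}. 2*k+1)"
    proof -
      have "n + 2*m = 2*(n-1)+1" using nm by simp
      then show ?thesis unfolding D_def using dfact_odd[of "n-1"] N_def n2 by (simp add: of_nat_diff)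
    qed
    have Drefl: "[D = (-1)^n * (\<Prod>j\<in>{1..N}. 2*j)] (mod P)"
    proof -
      have "[D = (\<Prod>k\<in>{0..N-1}. (-1) * (2*(N-k)))] (mod P)" unfolding Dprod
        by (rule cong_prod) (simp add: cong_iff_dvd_diff PN algebra_simps)
      also have "(\<Prod>k\<in>{0..N-1}. (-1) * (2*(N-k))) = (-1)^n * (\<Prod>k\<in>{0..N-1}. 2*(N-k))"
        by (simp only: prod.distrib prod_constant) (simp add: N_def)
      also have "(\<Prod>k\<in>{0..N-1}. 2*(N-k)) = (\<Prod>j\<in>{1..N}. 2*j)"
        by (rule prod.reindex_bij_witness[where i="\<lambda>j. N-j" and j="\<lambda>k. N-k"]) auto
      finally show ?thesis .
    qed
    have Dfact: "D * (\<Prod>j\<in>{1..N}. 2*j) = fact (p - 1)"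
    proof -
      have "dfact (Suc (2*n-1)) * dfact (2*n-1) = fact (Suc (2*n-1))" by (rule dfact_fact)
      moreover have "Suc (2*n-1) = 2*n" "2*n-1 = n+2*m" "p - 1 = 2*n" using nm pn by auto
      ultimately have "dfact (2*n) * dfact (n+2*m) = fact (p-1)" by simp
      then have "int (dfact (2*n)) * D = fact (p-1)" unfolding D_def by (metis of_nat_fact of_nat_mult)
      moreover have "int (dfact (2*n)) = (\<Prod>j\<in>{1..N}. 2*j)" using dfact_even[of n] prod_2i[of n] N_def by simp
      ultimately show ?thesis by (simp add: mult.commute)
    qed
    have "[D * D = (-1)^n * (D * (\<Prod>j\<in>{1..N}. 2*j))] (mod P)"
      using Drefl by (simp add: cong_mult algebra_simps)
    also have "[(-1)^n * (D * (\<Prod>j\<in>{1..N}. 2*j)) = (-1)^n * (-1)] (mod P)"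
      unfolding Dfact using cong_mult[OF cong_refl[of "(-1::int)^n"] wilson_theorem[OF assms(1)]] P_def by simp
    also have "(-1::int)^n * (-1) = 1" using False by simp
    finally have DD: "[D * D = 1] (mod P)" .
    have "[A * A = ((-1)^m * D) * ((-1)^m * D)] (mod P)" using AD by (simp add: cong_mult)
    also have "((-1::int)^m * D) * ((-1)^m * D) = D * D"
      by (simp add: algebra_simps power_mult_distrib[symmetric])
    finally show ?thesis using DD cong_trans by blast
  qed
  have AeqB: "[A = B] (mod P)"
  proof -
    have "[A * (A * B) = A * 1] (mod P)" using cong_mult[OF cong_refl[of A] AB] .
    moreover have "[(A * A) * B = 1 * B] (mod P)" using cong_mult[OF A2 cong_refl[of B]] .
    ultimately have "[A * 1 = A * (A * B)] (mod P)" "[A * (A * B) = 1 * B] (mod P)"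
      by (simp_all add: mult.assoc cong_sym)
    then show ?thesis using cong_trans by fastforce
  qed
  have B2: "[B * B = 1] (mod P)"
  proof -
    have "[B * B = A * B] (mod P)" using cong_mult[OF cong_sym[OF AeqB] cong_refl[of B]] .
    then show ?thesis using AB cong_trans by blast
  qed
  have e1: "(B - 1) * (B + 1) = B * B - 1" by (simp add: algebra_simps)
  have "P dvd B * B - 1" using B2 by (simp add: cong_iff_dvd_diff)
  then have "P dvd (B - 1) * (B + 1)" unfolding e1 .
  then have "P dvd B - 1 \<or> P dvd B + 1" using Pprime by (simp add: prime_dvd_mult_iff)
  moreover have "P dvd B - 1 \<longleftrightarrow> [B = 1] (mod P)" by (simp add: cong_iff_dvd_diff)
  moreover have "P dvd B + 1 \<longleftrightarrow> [B = -1] (mod P)" by (simp add: cong_iff_dvd_diff)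
  ultimately have Bpm: "[B = 1] (mod P) \<or> [B = -1] (mod P)" by blast
  show ?thesis using AeqB Bpm unfolding P_def by blast
qed

end
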